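(* With $\nu^{(n)}(\epsilon_0)$ and $\nu^{(n)}(\epsilon_1)$ the asymptotic densities of the sets $\{k\in\mathbf{N}:\xi_n(k)\text{ even}\}$ and $\{k\in\mathbf{N}:\xi_n(k)\text{ odd}\}$ respectively, one has $\lim_{n\to\infty}\nu^{(n)}(\epsilon_0)=2/3$ and $\lim_{n\to\infty}\nu^{(n)}(\epsilon_1)=1/3$.
   Context: $\mathbf{N}=\{1,2,3,\dots\}$. The asymptotic density of $K\subseteq\mathbf{N}$ is $\lim_{m\to\infty}\#(K\cap[1,m])/m$ when it exists. The Collatz map $\xi:\mathbf{N}\to\mathbf{N}$ is $\xi(\omega)=\omega/2$ if $\omega$ is even and $\xi(\omega)=3\omega+1$ if $\omega$ is odd; $\xi_n$ denotes its $n$-fold iterate, with $\xi_0$ the identity. *)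

theory Defs
  imports Complex_Main
begin

text \<open>The Collatz map on positive integers (0 is never reached from positive inputs).\<close>
definition collatz :: "nat \<Rightarrow> nat" where
  "collatz w = (if even w then w div 2 else 3 * w + 1)"

definition has_density :: "nat set \<Rightarrow> real \<Rightarrow> bool" where
  "has_density K d \<longleftrightarrow>
     ((\<lambda>m. real (card (K \<inter> {1..m})) / real m) \<longlongrightarrow> d) sequentially"

end

theory Submission
  imports Defs
begin

abbreviation F :: "nat \<Rightarrow> nat \<Rightarrow> nat" where "F n \<equiv> collatz ^^ n"

lemma F_Suc: "F (Suc n) k = F n (collatz k)"
  by (simp only: funpow_Suc_right comp_apply)

lemma per: "F n (k + q * 2^(n+j)) mod 2^j = F n k mod 2^j"
proof (induction n arbitrary: k q)
  case 0
  then show ?case by simp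
next
  case (Suc n)
  show ?case
  proof (cases "even k")
    case True
    have "collatz (k + q * 2^(Suc n+j)) = collatz k + q * 2^(n+j)"
      using True by (auto simp: collatz_def)
    then show ?thesis using Suc[of "collatz k" q] by (simp only: F_Suc)
  next
    case False
    have "collatz (k + q * 2^(Suc n+j)) = collatz k + (6*q) * 2^(n+j)"
      using False by (auto simp: collatz_def)
    then show ?thesis using Suc[of "collatz k" "6*q"] by (simp only: F_Suc)
  qed
qed

lemma par_per: "even (F n (k + q * 2^(n+1))) = even (F n k)"
  using per[of n k q 1] by (simp add: even_iff_mod_2_eq_zero)

lemma par_mod: assumes "n + 1 \<le> M"
  shows "even (F n (k mod 2^M)) = even (F n k)"
proof -
  have "2^M = 2^(M-(n+1)) * (2::nat)^(n+1)" using assms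
    by (metis le_add_diff_inverse2 power_add)
  hence "k = k mod 2^M + ((k div 2^M) * 2^(M-(n+1))) * 2^(n+1)"
    by (metis mod_div_mult_eq mult.assoc add.commute)
  then show ?thesis by (metis par_per)
qed

definition cnt :: "(nat \<Rightarrow> bool) \<Rightarrow> nat \<Rightarrow> nat" where
  "cnt P m = (\<Sum>k<m. of_bool (P k))"

lemma cnt_mono: "m \<le> m' \<Longrightarrow> cnt P m \<le> cnt P m'"
  unfolding cnt_def by (rule sum_mono2) auto

lemma cnt_shift: fixes P :: "nat \<Rightarrow> bool" and q T k :: nat
  assumes "\<And>k. P (k + T) = P k"
  shows "P (k + q*T) = P k"
proof (induction q)
  case 0 then show ?case by simp
next
  case (Suc q)
  have "k + Suc q * T = (k + q*T) + T" by simp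
  then show ?case using Suc assms[of "k + q*T"] by (simp only:)
qed

lemma cnt_mult: assumes "\<And>k. P (k + T) = P k"
  shows "cnt P (q*T) = q * cnt P T"
proof (induction q)
  case 0 then show ?case by (simp add: cnt_def)
next
  case (Suc q)
  have "cnt P (Suc q * T) = (\<Sum>k<q*T. of_bool (P k)) + (\<Sum>k=q*T..<q*T+T. of_bool (P k))"
    unfolding cnt_def
    by (metis add.commute lessThan_atLeast0 mult_Suc sum.atLeastLessThan_concat le_add1 zero_le)
  also have "(\<Sum>k=q*T..<q*T+T. of_bool (P k)) = (\<Sum>k=0..<T. of_bool (P (k + q*T)))"
    using sum.shift_bounds_nat_ivl[of "\<lambda>k. of_bool (P k)" 0 "q*T" T]
    by (simp add: add.commute)
  also have "\<dots> = cnt P T" unfolding cnt_def using cnt_shift[of P T, OF assms]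
    by (simp add: lessThan_atLeast0)
  finally show ?case using Suc by (simp add: cnt_def)
qed

lemma cnt_split: "cnt P (2*N) = cnt (\<lambda>m. P (2*m)) N + cnt (\<lambda>m. P (2*m+1)) N"
  unfolding cnt_def by (induction N) (auto simp: mult_2)

lemma density_periodic:
  assumes T: "T > 0" and P: "\<And>k. P (k + T) = P k"
  shows "has_density {k. k \<ge> 1 \<and> P k} (real (cnt P T) / real T)"
proof -
  define c where "c = cnt P T"
  define A where "A m = card ({k. k \<ge> 1 \<and> P k} \<inter> {1..m})" for m
  have Aeq: "cnt P (Suc m) = of_bool (P 0) + A m" for m
  proof -
    have "cnt P (Suc m) = (\<Sum>k\<in>insert 0 {1..m}. of_bool (P k))"
      unfolding cnt_def by (rule sum.cong) auto
    also have "\<dots> = of_bool (P 0) + (\<Sum>k\<in>{1..m}. of_bool (P k))" by simp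
    also have "(\<Sum>k\<in>{1..m}. of_bool (P k)) = A m"
    proof -
      have "{1..m} \<inter> {x. P x} = {k. k\<ge>1 \<and> P k} \<inter> {1..m}" by auto
      then show ?thesis unfolding A_def by simp
    qed
    finally show ?thesis .
  qed
  have cq: "cnt P (q*T) = q*c" for q using cnt_mult[of P T, OF P] c_def by simp
  have bnd: "A m * T \<le> (m+T)*c \<and> m*c \<le> (A m + 1 + c) * T" for m
  proof -
    define q where "q = m div T"
    have qT: "q*T \<le> m" "m < (q+1)*T"
    proof -
      have e1: "m div T * T + m mod T = m" by (rule div_mult_mod_eq)
      have e2: "m mod T < T" using T by simp
      show "q*T \<le> m" unfolding q_def using e1 by linarith
      have e3: "(m div T + 1)*T = m div T * T + T" by (simp add: algebra_simps)
      show "m < (q+1)*T" unfolding q_def using e1 e2 e3 by linarith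
    qed
    have "A m \<le> cnt P (Suc m)" using Aeq[of m] by simp
    also have "\<dots> \<le> cnt P ((q+1)*T)" by (rule cnt_mono) (use qT in auto)
    finally have u: "A m \<le> (q+1)*c" using cq[of "q+1"] by simp
    have "q*c = cnt P (q*T)" using cq by simp
    also have "\<dots> \<le> cnt P (Suc m)" by (rule cnt_mono) (use qT in auto)
    finally have l: "q*c \<le> A m + 1" using Aeq[of m] by (cases "P 0") simp_all
    have "A m * T \<le> (q+1)*c*T" using u by simp
    also have "\<dots> = q*T*c + T*c" by (simp add: algebra_simps)
    also have "\<dots> \<le> m*c + T*c" using qT by simp
    finally have 1: "A m * T \<le> (m+T)*c" by (simp add: algebra_simps)
    have "m*c \<le> (q+1)*T*c" using qT by simp
    also have "\<dots> = q*c*T + T*c" by (simp add: algebra_simps)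
    also have "\<dots> \<le> (A m + 1)*T + T*c" using mult_le_mono1[OF l, of T] by (simp add: algebra_simps)
    finally have 2: "m*c \<le> (A m + 1 + c) * T" by (simp add: algebra_simps)
    show ?thesis using 1 2 by simp
  qed
  have "(\<lambda>m. real (A m) / real m) \<longlonglongrightarrow> real c / real T"
  proof (rule tendsto_sandwich)
    show "\<forall>\<^sub>F m in sequentially. real c / real T - real (c+1) / real m \<le> real (A m) / real m"
    proof (rule eventually_sequentiallyI[of 1])
      fix m :: nat assume m: "1 \<le> m"
      have "real (m*c) \<le> real ((A m + 1 + c) * T)" using bnd[of m] by linarith
      hence "real m * c \<le> (real (A m) + real (c+1)) * T" by (simp add: algebra_simps)
      hence h: "real m * c - real (c+1) * T \<le> real (A m) * T" by (simp add: algebra_simps)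
      have e: "real c / real T - real (c+1) / real m = (real m * c - real (c+1) * T) / (real T * real m)"
        using m T by (simp add: field_simps)
      have e2: "real (A m) / real m = (real (A m) * T) / (real T * real m)" using T by simp
      show "real c / real T - real (c+1) / real m \<le> real (A m) / real m"
        unfolding e e2 by (rule divide_right_mono[OF h]) simp
    qed
    show "\<forall>\<^sub>F m in sequentially. real (A m) / real m \<le> real c / real T + real (c+1) / real m"
    proof (rule eventually_sequentiallyI[of 1])
      fix m :: nat assume m: "1 \<le> m"
      have "real (A m * T) \<le> real ((m+T)*c)" using bnd[of m] by linarith
      hence "real (A m) * T \<le> (real m + T) * c" by simp
      hence h: "real (A m) * T \<le> real m * c + real (c+1) * T" by (simp add: algebra_simps)
      have e: "real c / real T + real (c+1) / real m = (real m * c + real (c+1) * T) / (real T * real m)"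
        using m T by (simp add: field_simps)
      have e2: "real (A m) / real m = (real (A m) * T) / (real T * real m)" using T by simp
      show "real (A m) / real m \<le> real c / real T + real (c+1) / real m"
        unfolding e e2 by (rule divide_right_mono[OF h]) simp
    qed
    show "(\<lambda>m. real c / real T - real (c+1) / real m) \<longlonglongrightarrow> real c / real T"
      using tendsto_diff[OF tendsto_const lim_const_over_n] by simp
    show "(\<lambda>m. real c / real T + real (c+1) / real m) \<longlonglongrightarrow> real c / real T"
      using tendsto_add[OF tendsto_const lim_const_over_n] by simp
  qed
  then show ?thesis unfolding has_density_def A_def c_def by simp
qed



lemma inj3: assumes "(m::nat) < 2^k" "m' < 2^k" "(3*m+2) mod 2^k = (3*m'+2) mod 2^k" shows "m = m'"
proof -
  have "int ((3*m+2) mod 2^k) = int ((3*m'+2) mod 2^k)" using assms(3) by simp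
  hence "(3*int m+2) mod 2^k = (3*int m'+2) mod 2^k" by (simp add: zmod_int add.commute)
  hence "(2::int)^k dvd (3*int m+2) - (3*int m'+2)" by (simp add: mod_eq_dvd_iff)
  hence d: "(2::int)^k dvd (int m - int m') * 3" by (simp add: algebra_simps)
  have "coprime ((2::int)^k) 3" by simp
  hence "(2::int)^k dvd (int m - int m')" using d coprime_dvd_mult_left_iff by blast
  moreover have "int m < 2^k" "int m' < 2^k" using assms(1,2) by (metis of_nat_less_iff of_nat_numeral of_nat_power)+
  hence "\<bar>int m - int m'\<bar> < 2^k" by linarith
  ultimately show ?thesis using dvd_imp_le_int[of "int m - int m'" "2^k"] by fastforce
qed
lemma cnt_perm: assumes "\<And>m. m < N \<Longrightarrow> g m < N"
  and "\<And>m m'. m < N \<Longrightarrow> m' < N \<Longrightarrow> g m = g m' \<Longrightarrow> m = m'"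
  shows "cnt (\<lambda>m. Q (g m)) N = cnt Q N"
proof -
  have inj: "inj_on g {..<N}" using assms(2) unfolding inj_on_def by auto
  have "g ` {..<N} \<subseteq> {..<N}" using assms(1) by auto
  moreover have "card (g ` {..<N}) = card {..<N}" using card_image[OF inj] .
  ultimately have im: "g ` {..<N} = {..<N}" by (simp add: card_subset_eq)
  have "cnt Q N = (\<Sum>x\<in>g ` {..<N}. of_bool (Q x))" unfolding cnt_def im ..
  also have "\<dots> = cnt (\<lambda>m. Q (g m)) N" unfolding cnt_def by (simp only: sum.reindex[OF inj] comp_def)
  finally show ?thesis by simp
qed

definition c0 :: "nat \<Rightarrow> nat" where "c0 n = cnt (\<lambda>k. even (F n k)) (2^(n+1))"

lemma Pper: "even (F n (k + 2^(n+1))) = even (F n k)"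
  using par_per[of n k 1] by simp

lemma c0_mult: "cnt (\<lambda>k. even (F n k)) (q * 2^(n+1)) = q * c0 n"
  unfolding c0_def by (rule cnt_mult) (rule Pper)

lemma c0_rec: "c0 (Suc (Suc n)) = c0 (Suc n) + 2 * c0 n"
proof -
  define N :: nat where "N = 2^(n+2)"
  have "c0 (Suc (Suc n)) = cnt (\<lambda>k. even (F (Suc (Suc n)) k)) (2*N)"
    unfolding c0_def N_def by (simp add: power_Suc)
  also have "\<dots> = cnt (\<lambda>m. even (F (Suc (Suc n)) (2*m))) N + cnt (\<lambda>m. even (F (Suc (Suc n)) (2*m+1))) N"
    by (rule cnt_split)
  also have "cnt (\<lambda>m. even (F (Suc (Suc n)) (2*m))) N = c0 (Suc n)"
  proof -
    have "F (Suc (Suc n)) (2*m) = F (Suc n) m" for m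
      by (simp only: F_Suc[of "Suc n"]) (simp add: collatz_def)
    then show ?thesis unfolding c0_def N_def by simp
  qed
  also have "cnt (\<lambda>m. even (F (Suc (Suc n)) (2*m+1))) N = 2 * c0 n"
  proof -
    have "F (Suc (Suc n)) (2*m+1) = F n (3*m+2)" for m
    proof -
      have "F (Suc (Suc n)) (2*m+1) = F n (collatz (collatz (2*m+1)))"
        by (simp only: F_Suc)
      also have "collatz (collatz (2*m+1)) = 3*m+2" by (simp add: collatz_def)
      finally show ?thesis .
    qed
    hence "cnt (\<lambda>m. even (F (Suc (Suc n)) (2*m+1))) N = cnt (\<lambda>m. even (F n ((3*m+2) mod N))) N"
      unfolding N_def using par_mod[of n "n+2"] by simp
    also have "\<dots> = cnt (\<lambda>x. even (F n x)) N"
    proof (rule cnt_perm)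
      show "(3 * m + 2) mod N < N" for m unfolding N_def by simp
      show "m = m'" if "m < N" "m' < N" "(3 * m + 2) mod N = (3 * m' + 2) mod N" for m m'
        using inj3[of m "n+2" m'] that unfolding N_def by blast
    qed
    also have "\<dots> = 2 * c0 n" using c0_mult[of n 2] unfolding N_def by (simp add: power_Suc)
    finally show ?thesis .
  qed
  finally show ?thesis .
qed

lemma c0_0: "c0 0 = 1"
  by (simp add: c0_def cnt_def numeral_eq_Suc lessThan_Suc)

lemma c0_1: "c0 1 = 3"
proof -
  have s: "{..<4::nat} = {0,1,2,3}" by auto
  have "collatz 0 = 0" "collatz 1 = 4" "collatz 2 = 1" "collatz 3 = 10" by (simp_all add: collatz_def)
  then show ?thesis unfolding c0_def cnt_def by (simp add: s del: sum_of_bool_eq)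
qed

lemma c0_closed: "3 * int (c0 n) = 2^(n+2) - (-1)^n \<and> 3 * int (c0 (Suc n)) = 2^(n+3) - (-1)^(Suc n)"
proof (induction n)
  case 0 then show ?case using c0_0 c0_1 by (simp add: One_nat_def[symmetric] del: One_nat_def)
next
  case (Suc n)
  then show ?case by (simp add: c0_rec power_add algebra_simps)
qed

lemma nu0_eq: "real (c0 n) / real (2^(n+1)) = 2/3 - (1/6) * (-1/2)^n"
proof -
  have "3 * real (c0 n) = 2^(n+2) - (-1)^n"
    using arg_cong[OF conjunct1[OF c0_closed[of n]], of real_of_int] by simp
  moreover have "(2::real)^n * (-1/2)^n = (-1)^n" by (simp add: power_mult_distrib[symmetric])
  ultimately show ?thesis by (simp add: field_simps)
qed


lemma cnt_compl: "cnt P m + cnt (\<lambda>k. \<not> P k) m = m"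
proof -
  have "cnt P m + cnt (\<lambda>k. \<not> P k) m = (\<Sum>k<m. of_bool (P k) + of_bool (\<not> P k))"
    unfolding cnt_def by (simp only: sum.distrib)
  also have "\<dots> = (\<Sum>k<m. (1::nat))" by (rule sum.cong) auto
  finally show ?thesis by simp
qed

theorem corollary3p1:
  "\<exists>\<nu>0 \<nu>1 :: nat \<Rightarrow> real.
     (\<forall>n. has_density {k. k \<ge> 1 \<and> even ((collatz ^^ n) k)} (\<nu>0 n)) \<and>
     (\<forall>n. has_density {k. k \<ge> 1 \<and> odd ((collatz ^^ n) k)} (\<nu>1 n)) \<and>
     (\<nu>0 \<longlonglongrightarrow> 2/3) \<and> (\<nu>1 \<longlonglongrightarrow> 1/3)"
proof (intro exI conjI allI)
  define T :: "nat \<Rightarrow> nat" where "T n = 2^(n+1)" for n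
  show "has_density {k. k \<ge> 1 \<and> even ((collatz ^^ n) k)} (real (c0 n) / real (2^(n+1)))" for n
    unfolding c0_def
  proof (rule density_periodic)
    show "(0::nat) < 2^(n+1)" by simp
    show "even (F n (k + 2^(n+1))) = even (F n k)" for k by (rule Pper)
  qed
  show "has_density {k. k \<ge> 1 \<and> odd ((collatz ^^ n) k)}
      (real (cnt (\<lambda>k. odd (F n k)) (2^(n+1))) / real (2^(n+1)))" for n
  proof (rule density_periodic)
    show "(0::nat) < 2^(n+1)" by simp
    show "odd (F n (k + 2^(n+1))) = odd (F n k)" for k using Pper[of n k] by simp
  qed
  have e0: "(\<lambda>n. real (c0 n) / real (2^(n+1))) = (\<lambda>n. 2/3 - (1/6) * (-1/2)^n)"
    using nu0_eq by auto
  have lim: "(\<lambda>n. 2/3 - (1/6) * (-1/2::real)^n) \<longlonglongrightarrow> 2/3 - (1/6) * 0"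
    by (intro tendsto_intros LIMSEQ_power_zero) simp
  show "(\<lambda>n. real (c0 n) / real (2^(n+1))) \<longlonglongrightarrow> 2/3"
    unfolding e0 using lim by simp
  have e1: "real (cnt (\<lambda>k. odd (F n k)) (2^(n+1))) / real (2^(n+1)) = 1 - (2/3 - (1/6) * (-1/2)^n)" for n
  proof -
    have "cnt (\<lambda>k. odd (F n k)) (2^(n+1)) = 2^(n+1) - c0 n"
      using cnt_compl[of "\<lambda>k. even (F n k)" "2^(n+1)"] unfolding c0_def by simp
    moreover have "c0 n \<le> 2^(n+1)"
      using cnt_compl[of "\<lambda>k. even (F n k)" "2^(n+1)"] unfolding c0_def by simp
    ultimately have "real (cnt (\<lambda>k. odd (F n k)) (2^(n+1))) = real (2^(n+1)) - real (c0 n)"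
      by simp
    hence "real (cnt (\<lambda>k. odd (F n k)) (2^(n+1))) / real (2^(n+1)) = 1 - real (c0 n) / real (2^(n+1))"
      by (simp add: diff_divide_distrib)
    then show ?thesis using nu0_eq[of n] by simp
  qed
  show "(\<lambda>n. real (cnt (\<lambda>k. odd (F n k)) (2^(n+1))) / real (2^(n+1))) \<longlonglongrightarrow> 1/3"
    unfolding e1 using tendsto_diff[OF tendsto_const lim, of 1] by simp
qed

end
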